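(* Let $n\ge2$ and $\mathsf u\in\mathcal S_n$. Then $\mathsf r^{\mathsf u}$ is a tree-like factorization of $\lambda_n$.
   Context: $\widetilde S_n$ is the group, under composition $(vw)(k)=v(w(k))$, of bijections $w:\mathbb Z\to\mathbb Z$ with $w(i+n)=w(i)+n$ and $\sum_{i=1}^n w(i)=\binom{n+1}2$. For $i\not\equiv j\pmod n$, $(\!(i,j)\!)$ swaps $i+kn$ and $j+kn$ for all $k$; $(\!(i,j)\!)=(\!(j,i)\!)=(\!(i+kn,j+kn)\!)$; $s_i=(\!(i,i+1)\!)$, $i\in\{0,\dots,n-1\}$. $\lambda_n(k)=k+n$ for $k\not\equiv0\pmod n$, $\lambda_n(k)=k-n(n-1)$ for $k\equiv0\pmod n$; its reflection length is $2n-2$, and $\textsc{fact}(\lambda_n)$ is the set of sequences of $2n-2$ reflections with product $\lambda_n$. A sequence $[r_1,\dots,r_{2n-2}]\in\textsc{fact}(\lambda_n)$ is tree-like if one can write $r_k=(\!(a_{k-1},b_k)\!)$ with integers $a_{k-1}<b_k$ ($1\le k\le 2n-2$) and $a_k\equiv b_k\pmod n$ ($1\le k\le 2n-3$). $\bm\lambda_n$ is the word $[s_0,\dots,s_{n-1}]$ repeated $n-1$ times with $j$-th letter $\sigma_j=s_{(j-1)\bmod n}$. A subword is $\mathsf u=[u_1,\dots,u_{n(n-1)}]$ with $u_j\in\{\sigma_j,e\}$; $j$ is a skip if $u_j=e$. $u_{(j)}=u_1\cdots u_j$, $u_{(0)}=e$. $\mathcal S_n$ is the set of subwords with exactly $2n-2$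 skips and product $e$. $\textsc{inv}(\mathsf u)=[t_1,\dots,t_{n(n-1)}]$, $t_j=u_{(j-1)}\sigma_ju_{(j-1)}^{-1}$, and $\mathsf r^{\mathsf u}$ is the subsequence of the $t_j$ at skips $j$, in increasing order. *)

theory Defs
  imports Main
begin

text \<open>Affine permutations of Z, with window size n; represented as functions int => int.
  Composition (v w)(k) = v (w k) is function composition.\<close>

definition affine_perm :: "nat \<Rightarrow> (int \<Rightarrow> int) \<Rightarrow> bool" where
  "affine_perm n w \<longleftrightarrow> bij w \<and> (\<forall>i. w (i + int n) = w i + int n) \<and>
     (\<Sum>i=1..int n. w i) = int n * (int n + 1) div 2"

text \<open>The affine reflection ((i,j)): swaps i+kn and j+kn for all k (meaningful for i, j
  incongruent mod n).\<close>
definition arefl :: "nat \<Rightarrow> int \<Rightarrow> int \<Rightarrow> int \<Rightarrow> int" where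
  "arefl n i j = (\<lambda>k. if k mod int n = i mod int n then k + (j - i)
                      else if k mod int n = j mod int n then k + (i - j) else k)"

definition is_reflection :: "nat \<Rightarrow> (int \<Rightarrow> int) \<Rightarrow> bool" where
  "is_reflection n r \<longleftrightarrow> (\<exists>i j. i mod int n \<noteq> j mod int n \<and> r = arefl n i j)"

definition sgen :: "nat \<Rightarrow> int \<Rightarrow> int \<Rightarrow> int" where
  "sgen n i = arefl n i (i + 1)"

definition lambda_n :: "nat \<Rightarrow> int \<Rightarrow> int" where
  "lambda_n n k = (if k mod int n \<noteq> 0 then k + int n else k - int n * (int n - 1))"

definition prodw :: "(int \<Rightarrow> int) list \<Rightarrow> int \<Rightarrow> int" where
  "prodw rs = foldr (\<circ>) rs id"

definition factset :: "nat \<Rightarrow> (int \<Rightarrow> int) \<Rightarrow> (int \<Rightarrow> int) list set" where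
  "factset n w = {rs. length rs = 2 * n - 2 \<and> (\<forall>r\<in>set rs. is_reflection n r) \<and> prodw rs = w}"

text \<open>Tree-like factorization of lambda_n; entries indexed 1..2n-2, r_k = rs!(k-1).\<close>
definition tree_like :: "nat \<Rightarrow> (int \<Rightarrow> int) list \<Rightarrow> bool" where
  "tree_like n rs \<longleftrightarrow> rs \<in> factset n (lambda_n n) \<and>
     (\<exists>a b :: nat \<Rightarrow> int.
        (\<forall>k\<in>{1..2*n-2}. a (k-1) < b k \<and> a (k-1) mod int n \<noteq> b k mod int n
                          \<and> rs ! (k-1) = arefl n (a (k-1)) (b k)) \<and>
        (\<forall>k\<in>{1..2*n-3}. a k mod int n = b k mod int n))"

definition sigma :: "nat \<Rightarrow> nat \<Rightarrow> int \<Rightarrow> int" where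
  "sigma n j = sgen n (int ((j - 1) mod n))"

text \<open>Subwords as lists u of length n(n-1), u_j = u!(j-1).\<close>
definition skips :: "(int \<Rightarrow> int) list \<Rightarrow> nat set" where
  "skips u = {j. 1 \<le> j \<and> j \<le> length u \<and> u ! (j-1) = id}"

definition Sn :: "nat \<Rightarrow> (int \<Rightarrow> int) list set" where
  "Sn n = {u. length u = n * (n - 1) \<and>
              (\<forall>j\<in>{1..n*(n-1)}. u ! (j-1) = sigma n j \<or> u ! (j-1) = id) \<and>
              card (skips u) = 2 * n - 2 \<and> prodw u = id}"

definition upref :: "(int \<Rightarrow> int) list \<Rightarrow> nat \<Rightarrow> int \<Rightarrow> int" where
  "upref u j = prodw (take j u)"

definition tinv :: "nat \<Rightarrow> (int \<Rightarrow> int) list \<Rightarrow> nat \<Rightarrow> int \<Rightarrow> int" where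
  "tinv n u j = upref u (j-1) \<circ> sigma n j \<circ> inv (upref u (j-1))"

definition r_of :: "nat \<Rightarrow> (int \<Rightarrow> int) list \<Rightarrow> (int \<Rightarrow> int) list" where
  "r_of n u = map (tinv n u) (filter (\<lambda>j. u ! (j-1) = id) [1..<length u + 1])"

end

theory Submission
  imports Defs
begin

definition aff :: "nat \<Rightarrow> (int \<Rightarrow> int) \<Rightarrow> bool" where
  "aff n p \<longleftrightarrow> bij p \<and> (\<forall>x. p (x + int n) = p x + int n)"

lemma prodw_Nil[simp]: "prodw [] = id" by (simp add: prodw_def)
lemma prodw_Cons[simp]: "prodw (f # fs) = f \<circ> prodw fs" by (simp add: prodw_def)
lemma prodw_append[simp]: "prodw (xs @ ys) = prodw xs \<circ> prodw ys"
  by (induction xs) (auto simp: prodw_def)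

lemma aff_id[simp]: "aff n id" by (simp add: aff_def)

lemma aff_comp: "aff n p \<Longrightarrow> aff n q \<Longrightarrow> aff n (p \<circ> q)"
  unfolding aff_def by (simp add: bij_comp)

lemma aff_prodw: "(\<forall>f\<in>set fs. aff n f) \<Longrightarrow> aff n (prodw fs)"
  by (induction fs) (simp_all add: aff_comp)

lemma aff_shift:
  assumes "aff n p" shows "p (x + t * int n) = p x + t * int n"
proof -
  have per: "\<And>y. p (y + int n) = p y + int n" using assms by (simp add: aff_def)
  have A: "p (x + int k * int n) = p x + int k * int n" for k :: nat and x
  proof (induction k)
    case (Suc k)
    have "p (x + int (Suc k) * int n) = p ((x + int k * int n) + int n)" by (simp add: algebra_simps)
    also have "\<dots> = p (x + int k * int n) + int n" by (rule per)
    also have "\<dots> = p x + int (Suc k) * int n" using Suc by (simp add: algebra_simps)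
    finally show ?case .
  qed simp
  show ?thesis
  proof (cases "t \<ge> 0")
    case True
    then obtain k where "t = int k" using nonneg_int_cases by blast
    then show ?thesis using A by simp
  next
    case False
    then have "t = - int (nat (- t))" by simp
    then obtain k where k: "t = - int k" by blast
    have "p ((x + t * int n) + int k * int n) = p (x + t * int n) + int k * int n" using A by blast
    then show ?thesis using k by simp
  qed
qed

lemma aff_mod:
  assumes "aff n p" "n > 0"
  shows "p x mod int n = p y mod int n \<longleftrightarrow> x mod int n = y mod int n"
proof
  assume "x mod int n = y mod int n"
  then have "int n dvd x - y" by (simp add: mod_eq_dvd_iff)
  then obtain t where "x - y = int n * t" by (auto simp: dvd_def)
  then have "x = y + t * int n" by (simp add: algebra_simps)
  then have "p x = p y + t * int n" using aff_shift[OF assms(1)] by simp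
  then show "p x mod int n = p y mod int n" by simp
next
  assume h: "p x mod int n = p y mod int n"
  from h have "int n dvd p x - p y" by (simp add: mod_eq_dvd_iff)
  then obtain t where "p x - p y = int n * t" by (auto simp: dvd_def)
  then have "p x = p y + t * int n" by (simp add: algebra_simps)
  also have "\<dots> = p (y + t * int n)" using aff_shift[OF assms(1)] by simp
  finally have "p x = p (y + t * int n)" .
  moreover have "inj p" using assms(1) by (simp add: aff_def bij_is_inj)
  ultimately have "x = y + t * int n" by (simp add: inj_eq)
  then show "x mod int n = y mod int n" by simp
qed

lemma mod_eq_ex: "x mod int n = i mod int n \<Longrightarrow> \<exists>t. x = i + t * int n"
proof -
  assume "x mod int n = i mod int n"
  then have "int n dvd x - i" by (simp add: mod_eq_dvd_iff)
  then obtain t where "x - i = int n * t" by (auto simp: dvd_def)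
  then show ?thesis by (intro exI[of _ t]) (simp add: algebra_simps)
qed

lemma mod_shift_eq: "x mod int n = i mod int n \<Longrightarrow> (x + (j - i)) mod int n = j mod int n"
proof -
  assume "x mod int n = i mod int n"
  then have "(x + (j - i)) mod int n = (i + (j - i)) mod int n" by (rule mod_add_cong) simp
  then show ?thesis by simp
qed

lemma arefl_invol:
  assumes "i mod int n \<noteq> j mod int n"
  shows "arefl n i j (arefl n i j x) = x"
proof -
  consider (a) "x mod int n = i mod int n" | (b) "x mod int n = j mod int n"
    | (c) "x mod int n \<noteq> i mod int n" "x mod int n \<noteq> j mod int n" by blast
  then show ?thesis
  proof cases
    case a
    have "(x + (j - i)) mod int n = j mod int n" using a by (rule mod_shift_eq)
    then show ?thesis using a assms by (simp add: arefl_def)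
  next
    case b
    have "(x + (i - j)) mod int n = i mod int n" using b by (rule mod_shift_eq)
    then show ?thesis using b assms by (simp add: arefl_def)
  next
    case c
    then show ?thesis by (simp add: arefl_def)
  qed
qed

lemma aff_arefl:
  assumes "i mod int n \<noteq> j mod int n"
  shows "aff n (arefl n i j)"
proof -
  have "arefl n i j \<circ> arefl n i j = id" using arefl_invol[OF assms] by (simp add: fun_eq_iff)
  then have "bij (arefl n i j)" by (metis o_bij)
  moreover have "arefl n i j (x + int n) = arefl n i j x + int n" for x
    by (simp add: arefl_def)
  ultimately show ?thesis by (simp add: aff_def)
qed

lemma sigma_Suc:
  assumes "n \<ge> 2"
  shows "sigma n (Suc k) x = (if x mod int n = int k mod int n then x + 1
     else if x mod int n = (int k + 1) mod int n then x - 1 else x)"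
proof -
  have e1: "int (k mod n) mod int n = int k mod int n" by (simp add: zmod_int)
  have e2: "(int (k mod n) + 1) mod int n = (int k + 1) mod int n"
    by (metis e1 mod_add_left_eq)
  show ?thesis unfolding sigma_def sgen_def arefl_def using e1 e2 by simp
qed

lemma mod_neq_small: "0 < a - b \<Longrightarrow> a - b < int n \<Longrightarrow> a mod int n \<noteq> b mod int n"
proof
  assume h: "0 < a - b" "a - b < int n" "a mod int n = b mod int n"
  then have "int n dvd a - b" by (simp add: mod_eq_dvd_iff)
  then obtain t where t: "a - b = int n * t" by (auto simp: dvd_def)
  with h have "t > 0" by (simp add: zero_less_mult_iff)
  then have "int n * t \<ge> int n" using mult_left_mono[of 1 t "int n"] by simp
  with h t show False by simp
qed

lemma sigma_ne_id: assumes "n \<ge> 2" shows "sigma n (Suc k) \<noteq> id"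
proof
  assume "sigma n (Suc k) = id"
  then have "sigma n (Suc k) (int k) = int k" by simp
  moreover have "int k mod int n \<noteq> (int k + 1) mod int n"
    using mod_neq_small[of "int k + 1" "int k" n] assms by auto
  ultimately show False using sigma_Suc[OF assms, of k "int k"] by simp
qed

lemma aff_sigma: assumes "n \<ge> 2" shows "aff n (sigma n j)"
  unfolding sigma_def sgen_def
  by (rule aff_arefl) (use mod_neq_small[of "int ((j - 1) mod n) + 1" "int ((j - 1) mod n)" n] assms in auto)

lemma conj_arefl:
  assumes "aff n p" "n > 0" "i mod int n \<noteq> j mod int n"
  shows "p \<circ> arefl n i j \<circ> inv p = arefl n (p i) (p j)"
proof
  fix y
  have bp: "bij p" using assms(1) by (simp add: aff_def)
  define x where "x = inv p y"
  have px: "p x = y" unfolding x_def using bp by (simp add: bij_is_surj surj_f_inv_f)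
  have lhs: "(p \<circ> arefl n i j \<circ> inv p) y = p (arefl n i j x)" by (simp add: x_def)
  have mi: "p x mod int n = p i mod int n \<longleftrightarrow> x mod int n = i mod int n" by (rule aff_mod[OF assms(1,2)])
  have mj: "p x mod int n = p j mod int n \<longleftrightarrow> x mod int n = j mod int n" by (rule aff_mod[OF assms(1,2)])
  have pij: "p i mod int n \<noteq> p j mod int n" using aff_mod[OF assms(1,2)] assms(3) by blast
  consider (a) "x mod int n = i mod int n" | (b) "x mod int n = j mod int n"
    | (c) "x mod int n \<noteq> i mod int n" "x mod int n \<noteq> j mod int n" by blast
  then show "(p \<circ> arefl n i j \<circ> inv p) y = arefl n (p i) (p j) y"
  proof cases
    case a
    then obtain t where t: "x = i + t * int n" using mod_eq_ex by blast
    have "arefl n i j x = j + t * int n" using a by (simp add: arefl_def t)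
    then have "p (arefl n i j x) = p (j + t * int n)" by simp
    also have "\<dots> = p j + t * int n" by (rule aff_shift[OF assms(1)])
    also have "\<dots> = y + (p j - p i)" using px t aff_shift[OF assms(1), of i t] by simp
    finally show ?thesis using lhs a mi px by (simp add: arefl_def)
  next
    case b
    then obtain t where t: "x = j + t * int n" using mod_eq_ex by blast
    have "arefl n i j x = i + t * int n" using b assms(3) by (simp add: arefl_def t)
    then have "p (arefl n i j x) = p (i + t * int n)" by simp
    also have "\<dots> = p i + t * int n" by (rule aff_shift[OF assms(1)])
    also have "\<dots> = y + (p i - p j)" using px t aff_shift[OF assms(1), of j t] by simp
    finally show ?thesis using lhs b mj px pij by (simp add: arefl_def)
  next
    case c
    then show ?thesis using lhs mi mj px by (simp add: arefl_def)
  qed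
qed

locale subw =
  fixes n :: nat and u :: "(int \<Rightarrow> int) list"
  assumes n2: "n \<ge> 2" and len: "length u = n * (n - 1)"
    and letters: "\<And>k. k < n * (n - 1) \<Longrightarrow> u ! k = sigma n (Suc k) \<or> u ! k = id"
begin

definition P where "P k = upref u k"
definition sk where "sk k \<longleftrightarrow> u ! k = id"
definition tau where "tau k = P k (int k)"
definition alp where "alp k = P k (int k + 1)"
definition ww where "ww k = (if sk k then tau k else alp k)"

lemma npos: "n > 0" using n2 by simp

lemma P0: "P 0 = id" by (simp add: P_def upref_def)

lemma P_Suc: "k < n * (n - 1) \<Longrightarrow> P (Suc k) = P k \<circ> u ! k"
  by (simp add: P_def upref_def take_Suc_conv_app_nth len)

lemma aff_P: "aff n (P k)"
proof -
  have "\<forall>f\<in>set (take k u). aff n f"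
  proof
    fix f assume "f \<in> set (take k u)"
    then have "f \<in> set u" by (meson in_set_takeD)
    then obtain j where j: "j < length u" "f = u ! j" by (metis in_set_conv_nth)
    then show "aff n f" using letters[of j] len aff_sigma[OF n2] by auto
  qed
  then show ?thesis unfolding P_def upref_def by (rule aff_prodw)
qed

lemma P_step:
  assumes "k < n * (n - 1)"
  shows "P (Suc k) x = (if sk k then P k x else if x mod int n = int k mod int n then P k (x + 1)
     else if x mod int n = (int k + 1) mod int n then P k (x - 1) else P k x)"
  using letters[OF assms] P_Suc[OF assms] sigma_Suc[OF n2, of k x]
  by (auto simp: sk_def)

lemma P_untouched:
  assumes "k \<le> k'" "k' \<le> n * (n - 1)"
    and "\<And>j. k \<le> j \<Longrightarrow> j < k' \<Longrightarrow> x mod int n \<noteq> int j mod int n \<and> x mod int n \<noteq> (int j + 1) mod int n"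
  shows "P k' x = P k x"
  using assms
proof (induction k' rule: dec_induct)
  case base
  then show ?case by simp
next
  case (step j)
  have "P (Suc j) x = P j x" using P_step[of j x] step by auto
  then show ?case using step by auto
qed

lemma tau_Suc: "k < n * (n - 1) \<Longrightarrow> tau (Suc k) = (if sk k then alp k else tau k)"
proof -
  assume k: "k < n * (n - 1)"
  have ne: "(int k + 1) mod int n \<noteq> int k mod int n"
    using mod_neq_small[of "int k + 1" "int k" n] n2 by auto
  have t: "tau (Suc k) = P (Suc k) (int k + 1)" by (simp add: tau_def add.commute)
  show ?thesis
    using P_step[OF k, of "int k + 1"] ne unfolding t by (auto simp: tau_def alp_def)
qed

lemma ww_eq: "k < n * (n - 1) \<Longrightarrow> P (Suc k) (int k) = ww k"
proof -
  assume k: "k < n * (n - 1)"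
  show ?thesis
    using P_step[OF k, of "int k"] by (auto simp: tau_def alp_def ww_def)
qed

lemma alp_small: "k < n - 1 \<Longrightarrow> alp k = int k + 1"
proof -
  assume k: "k < n - 1"
  have "k \<le> n * (n - 1)" using k n2 by (metis le_trans less_imp_le_nat mult_le_mono1 mult_1 one_le_numeral)
  have "P k (int k + 1) = P 0 (int k + 1)"
  proof (rule P_untouched)
    show "k \<le> n * (n - 1)" using k n2
      by (metis le_trans less_imp_le_nat mult_le_mono1 mult_1 one_le_numeral)
    fix j assume j: "0 \<le> j" "j < k"
    show "(int k + 1) mod int n \<noteq> int j mod int n \<and> (int k + 1) mod int n \<noteq> (int j + 1) mod int n"
      using mod_neq_small[of "int k + 1" "int j" n] mod_neq_small[of "int k + 1" "int j + 1" n] j k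
      by auto
  qed simp
  then show ?thesis by (simp add: alp_def P0)
qed

lemma alp_rec:
  assumes k1: "n - 1 \<le> k" and k2: "k < n * (n - 1)"
  shows "alp k = ww (k - (n - 1)) + int n"
proof -
  define j0 where "j0 = k - (n - 1)"
  have kj: "k = j0 + (n - 1)" using k1 unfolding j0_def by simp
  have j0N: "j0 < n * (n - 1)" using k2 kj by simp
  have "P k (int k + 1) = P (Suc j0) (int k + 1)"
  proof (rule P_untouched)
    show "Suc j0 \<le> k" using kj n2 by simp
    show "k \<le> n * (n - 1)" using k2 by simp
    fix j assume j: "Suc j0 \<le> j" "j < k"
    show "(int k + 1) mod int n \<noteq> int j mod int n \<and> (int k + 1) mod int n \<noteq> (int j + 1) mod int n"
      using mod_neq_small[of "int k + 1" "int j" n] mod_neq_small[of "int k + 1" "int j + 1" n] j kj n2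
      by auto
  qed
  also have "\<dots> = P (Suc j0) (int j0 + int n)" using kj n2 by (simp add: of_nat_diff)
  also have "\<dots> = P (Suc j0) (int j0) + int n"
    using aff_P[of "Suc j0"] by (simp add: aff_def)
  also have "P (Suc j0) (int j0) = ww j0" using ww_eq[OF j0N] .
  finally show ?thesis by (simp add: alp_def j0_def)
qed

lemma P_final:
  assumes k1: "n * (n - 1) - (n - 1) \<le> k" and k2: "k < n * (n - 1)"
  shows "P (n * (n - 1)) (int k) = ww k"
proof -
  have "P (n * (n - 1)) (int k) = P (Suc k) (int k)"
  proof (rule P_untouched)
    show "Suc k \<le> n * (n - 1)" using k2 by simp
    show "n * (n - 1) \<le> n * (n - 1)" by simp
    fix j assume j: "Suc k \<le> j" "j < n * (n - 1)"
    have "int j - int k < int n" using j k1 n2 by linarith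
    moreover have "int j + 1 - int k < int n" using j k1 n2 by linarith
    ultimately show "int k mod int n \<noteq> int j mod int n \<and> int k mod int n \<noteq> (int j + 1) mod int n"
      using mod_neq_small[of "int j" "int k" n] mod_neq_small[of "int j + 1" "int k" n] j
      by auto
  qed
  then show ?thesis using ww_eq[OF k2] by simp
qed

lemma tau0: "tau 0 = 0" by (simp add: tau_def P0)

lemma cls: "alp k mod int n \<noteq> tau k mod int n"
proof -
  have "(int k + 1) mod int n \<noteq> int k mod int n"
    using mod_neq_small[of "int k + 1" "int k" n] n2 by auto
  then show ?thesis using aff_mod[OF aff_P npos] by (simp add: alp_def tau_def)
qed

end

locale comb =
  fixes n :: nat and sk :: "nat \<Rightarrow> bool" and tau alp :: "nat \<Rightarrow> int"
  assumes n2: "n \<ge> 2"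
    and tauS: "\<And>k. k < n * (n - 1) \<Longrightarrow> tau (Suc k) = (if sk k then alp k else tau k)"
    and alp_small: "\<And>k. k < n - 1 \<Longrightarrow> alp k = int k + 1"
    and alp_rec: "\<And>k. n - 1 \<le> k \<Longrightarrow> k < n * (n - 1) \<Longrightarrow>
        alp k = (if sk (k - (n - 1)) then tau (k - (n - 1)) else alp (k - (n - 1))) + int n"
    and final: "\<And>k. n * (n - 1) - (n - 1) \<le> k \<Longrightarrow> k < n * (n - 1) \<Longrightarrow>
        (if sk k then tau k else alp k) = int k"
    and tau0: "tau 0 = 0" and tauN: "tau (n * (n - 1)) = int (n * (n - 1))"
    and cls: "\<And>k. k < n * (n - 1) \<Longrightarrow> alp k \<noteq> tau k + int n"
    and cardsk: "card {k. k < n * (n - 1) \<and> sk k} = 2 * (n - 1)"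
begin

definition dl where "dl k = alp k - tau k"
definition ee where "ee k = (if sk k then dl k else 0)"
definition base where "base k = int k + 1 + int (k div (n - 1))"

lemma m1: "n - 1 \<ge> 1" using n2 by simp

lemma base_lane: "l < n - 1 \<Longrightarrow> base (l + j * (n - 1)) = int l + 1 + int j * int n"
proof -
  assume l: "l < n - 1"
  have "(l + j * (n - 1)) div (n - 1) = j" using l by simp
  then have "base (l + j * (n - 1)) = int l + int j * int (n - 1) + 1 + int j"
    by (simp add: base_def)
  also have "\<dots> = int l + 1 + int j * int n" using n2 by (simp add: of_nat_diff algebra_simps)
  finally show ?thesis .
qed

lemma base_Suc: "base (Suc k) \<ge> base k + 1"
proof -
  have "Suc k div (n - 1) \<ge> k div (n - 1)" by (simp add: div_le_mono)
  then show ?thesis by (simp add: base_def)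
qed

lemma base_NN: "base (n * (n - 1)) = int (n * (n - 1)) + 1 + int n"
  using m1 by (simp add: base_def)

lemma alp_tau_ee: "(if sk k then tau k else alp k) = alp k - ee k"
  by (simp add: ee_def dl_def)

lemma lane_alp:
  assumes l: "l < n - 1"
  shows "j < n \<Longrightarrow> alp (l + j * (n - 1)) = base (l + j * (n - 1)) - (\<Sum>i<j. ee (l + i * (n - 1)))"
proof (induction j)
  case 0
  then show ?case using l alp_small[OF l] by (simp add: base_def)
next
  case (Suc j)
  define k where "k = l + Suc j * (n - 1)"
  have k1: "n - 1 \<le> k" unfolding k_def by simp
  have "Suc j * (n - 1) + (n - 1) \<le> n * (n - 1)" using Suc.prems
    by (metis add.commute mult_Suc mult_le_mono1 Suc_leI)
  then have k2: "k < n * (n - 1)" using l unfolding k_def by linarith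
  have km: "k - (n - 1) = l + j * (n - 1)" unfolding k_def by simp
  have "alp k = (if sk (l + j * (n - 1)) then tau (l + j * (n - 1)) else alp (l + j * (n - 1))) + int n"
    using alp_rec[OF k1 k2] unfolding km .
  also have "\<dots> = alp (l + j * (n - 1)) - ee (l + j * (n - 1)) + int n" by (simp only: alp_tau_ee)
  also have "\<dots> = base (l + j * (n - 1)) - (\<Sum>i<Suc j. ee (l + i * (n - 1))) + int n"
    using Suc by simp
  also have "\<dots> = base k - (\<Sum>i<Suc j. ee (l + i * (n - 1)))"
    unfolding k_def using base_lane[OF l, of j] base_lane[OF l, of "Suc j"] by (simp add: algebra_simps)
  finally show ?case unfolding k_def .
qed

lemma lane_sum:
  assumes l: "l < n - 1"
  shows "(\<Sum>i<n. ee (l + i * (n - 1))) = int n"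
proof -
  obtain m where nm: "n = Suc m" using n2 by (cases n) auto
  define k where "k = l + m * m"
  have nn: "n * (n - 1) = m * m + m" using nm by simp
  have k1: "n * (n - 1) - (n - 1) \<le> k" unfolding k_def using nn nm by simp
  have k2: "k < n * (n - 1)" unfolding k_def using nn l nm by simp
  have "alp k - ee k = int k" using final[OF k1 k2] alp_tau_ee by simp
  moreover have "alp k = base k - (\<Sum>i<m. ee (l + i * m))"
    using lane_alp[OF l, of m] nm unfolding k_def by simp
  moreover have "base k = int k + int n"
    unfolding k_def using base_lane[OF l, of m] nm by (simp add: algebra_simps)
  moreover have "(\<Sum>i<n. ee (l + i * (n - 1))) = (\<Sum>i<m. ee (l + i * m)) + ee k"
    unfolding k_def using nm by simp
  ultimately show ?thesis by simp
qed

definition LS where "LS l = {i. i < n \<and> sk (l + i * (n - 1))}"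

lemma LS_fin: "finite (LS l)" unfolding LS_def by simp

lemma partial_LS:
  assumes "j \<le> n"
  shows "(\<Sum>i<j. ee (l + i * (n - 1))) = (\<Sum>i\<in>LS l \<inter> {..<j}. dl (l + i * (n - 1)))"
proof -
  have "(\<Sum>i<j. ee (l + i * (n - 1))) = (\<Sum>i\<in>{i\<in>{..<j}. sk (l + i * (n - 1))}. dl (l + i * (n - 1)))"
    unfolding ee_def by (rule sum.inter_filter[symmetric]) simp
  also have "{i\<in>{..<j}. sk (l + i * (n - 1))} = LS l \<inter> {..<j}"
    unfolding LS_def using assms by auto
  finally show ?thesis .
qed

lemma LS_sum: "l < n - 1 \<Longrightarrow> (\<Sum>i\<in>LS l. dl (l + i * (n - 1))) = int n"
proof -
  assume l: "l < n - 1"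
  have "LS l \<inter> {..<n} = LS l" unfolding LS_def by auto
  then show ?thesis using lane_sum[OF l] partial_LS[of n l] by simp
qed

lemma lane_lt: "l < n - 1 \<Longrightarrow> i < n \<Longrightarrow> l + i * (n - 1) < n * (n - 1)"
proof -
  assume l: "l < n - 1" and i: "i < n"
  have "l + i * (n - 1) < Suc i * (n - 1)" using l by simp
  also have "\<dots> \<le> n * (n - 1)" using i by (intro mult_le_mono1) simp
  finally show ?thesis .
qed

lemma LS_card_ge2: "l < n - 1 \<Longrightarrow> card (LS l) \<ge> 2"
proof (rule ccontr)
  assume l: "l < n - 1" and c: "\<not> 2 \<le> card (LS l)"
  then consider "card (LS l) = 0" | "card (LS l) = 1" by linarith
  then show False
  proof cases
    case 1
    then have "LS l = {}" using LS_fin by simp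
    then show False using LS_sum[OF l] n2 by simp
  next
    case 2
    then obtain i where i: "LS l = {i}" by (meson card_1_singletonE)
    then have "dl (l + i * (n - 1)) = int n" using LS_sum[OF l] by simp
    moreover have "i < n" "sk (l + i * (n - 1))" using i unfolding LS_def by auto
    moreover have "alp (l + i * (n - 1)) \<noteq> tau (l + i * (n - 1)) + int n"
      using cls lane_lt[OF l \<open>i < n\<close>] by blast
    ultimately show False by (simp add: dl_def)
  qed
qed

lemma skipset_UN: "{k. k < n * (n - 1) \<and> sk k} = (\<Union>l<n - 1. (\<lambda>i. l + i * (n - 1)) ` LS l)"
proof
  show "{k. k < n * (n - 1) \<and> sk k} \<subseteq> (\<Union>l<n - 1. (\<lambda>i. l + i * (n - 1)) ` LS l)"
  proof
    fix k assume k: "k \<in> {k. k < n * (n - 1) \<and> sk k}"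
    define l where "l = k mod (n - 1)"
    define i where "i = k div (n - 1)"
    have kk: "k = l + i * (n - 1)" unfolding l_def i_def using mod_div_mult_eq[of k "n - 1"] by simp
    have "l < n - 1" unfolding l_def using m1 by simp
    moreover have "i < n" unfolding i_def using k m1 by (simp add: less_mult_imp_div_less)
    ultimately show "k \<in> (\<Union>l<n - 1. (\<lambda>i. l + i * (n - 1)) ` LS l)"
      using k kk unfolding LS_def by auto
  qed
next
  show "(\<Union>l<n - 1. (\<lambda>i. l + i * (n - 1)) ` LS l) \<subseteq> {k. k < n * (n - 1) \<and> sk k}"
    using lane_lt unfolding LS_def by auto
qed

lemma card_lanes: "card {k. k < n * (n - 1) \<and> sk k} = (\<Sum>l<n - 1. card (LS l))"
proof -
  have disj: "\<forall>l\<in>{..<n - 1}. \<forall>l'\<in>{..<n - 1}. l \<noteq> l' \<longrightarrow>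
      (\<lambda>i. l + i * (n - 1)) ` LS l \<inter> (\<lambda>i. l' + i * (n - 1)) ` LS l' = {}"
  proof (intro ballI impI)
    fix l l' assume l: "l \<in> {..<n - 1}" and l': "l' \<in> {..<n - 1}" and ne: "l \<noteq> l'"
    show "(\<lambda>i. l + i * (n - 1)) ` LS l \<inter> (\<lambda>i. l' + i * (n - 1)) ` LS l' = {}"
    proof (rule ccontr)
      assume "(\<lambda>i. l + i * (n - 1)) ` LS l \<inter> (\<lambda>i. l' + i * (n - 1)) ` LS l' \<noteq> {}"
      then obtain i i' where "l + i * (n - 1) = l' + i' * (n - 1)" by auto
      then have "(l + i * (n - 1)) mod (n - 1) = (l' + i' * (n - 1)) mod (n - 1)" by simp
      then show False using l l' ne by simp
    qed
  qed
  have inj: "inj_on (\<lambda>i. l + i * (n - 1)) A" for l A using m1 by (auto simp: inj_on_def)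
  have "card (\<Union>l<n - 1. (\<lambda>i. l + i * (n - 1)) ` LS l) = (\<Sum>l<n - 1. card ((\<lambda>i. l + i * (n - 1)) ` LS l))"
    by (rule card_UN_disjoint) (use disj LS_fin in auto)
  also have "\<dots> = (\<Sum>l<n - 1. card (LS l))" using inj by (simp add: card_image)
  finally show ?thesis using skipset_UN by simp
qed

lemma LS_card2: "l < n - 1 \<Longrightarrow> card (LS l) = 2"
proof (rule ccontr)
  assume l: "l < n - 1" and ne: "card (LS l) \<noteq> 2"
  then have gt: "card (LS l) > 2" using LS_card_ge2[OF l] by simp
  have "(\<Sum>l<n - 1. (2::nat)) < (\<Sum>l<n - 1. card (LS l))"
    by (rule sum_strict_mono_ex1) (use LS_card_ge2 l gt in auto)
  then show False using card_lanes cardsk by simp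
qed

lemma FS:
  assumes k: "k < n * (n - 1)" and s: "sk k"
  shows "(alp k = base k \<and> (\<exists>g. k < g \<and> g < n * (n - 1) \<and> sk g \<and> alp g = base g - dl k \<and> dl k + dl g = int n))
    \<or> (\<exists>f. f < k \<and> sk f \<and> alp f = base f \<and> alp k = base k - dl f \<and> dl f + dl k = int n)"
proof -
  define l where "l = k mod (n - 1)"
  define i where "i = k div (n - 1)"
  have kk: "k = l + i * (n - 1)" unfolding l_def i_def using mod_div_mult_eq[of k "n - 1"] by simp
  have l: "l < n - 1" unfolding l_def using m1 by simp
  have "i < n" unfolding i_def using k m1 by (simp add: less_mult_imp_div_less)
  then have iL: "i \<in> LS l" using s kk unfolding LS_def by simp
  obtain i1 i2 where L: "LS l = {i1, i2}" and i12: "i1 < i2"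
    using LS_card2[OF l] by (metis card_2_iff linorder_neqE insert_commute)
  have i1n: "i1 < n" "sk (l + i1 * (n - 1))" and i2n: "i2 < n" "sk (l + i2 * (n - 1))"
    using L unfolding LS_def by blast+
  have alpj: "alp (l + j * (n - 1)) = base (l + j * (n - 1)) - (\<Sum>i\<in>LS l \<inter> {..<j}. dl (l + i * (n - 1)))"
    if "j < n" for j using lane_alp[OF l that] partial_LS[of j l] that by simp
  have I1: "LS l \<inter> {..<i1} = {}" using L i12 by auto
  have I2: "LS l \<inter> {..<i2} = {i1}" using L i12 by auto
  have sum: "dl (l + i1 * (n - 1)) + dl (l + i2 * (n - 1)) = int n"
    using LS_sum[OF l] L i12 by simp
  have a1: "alp (l + i1 * (n - 1)) = base (l + i1 * (n - 1))" using alpj[OF i1n(1)] I1 by simp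
  have a2: "alp (l + i2 * (n - 1)) = base (l + i2 * (n - 1)) - dl (l + i1 * (n - 1))"
    using alpj[OF i2n(1)] I2 by simp
  have lt: "l + i1 * (n - 1) < l + i2 * (n - 1)" using i12 m1 by simp
  have g_lt: "l + i2 * (n - 1) < n * (n - 1)" using lane_lt[OF l i2n(1)] .
  have "i = i1 \<or> i = i2" using iL L by blast
  then show ?thesis
  proof
    assume "i = i1"
    then show ?thesis using kk a1 a2 sum lt g_lt i2n by blast
  next
    assume "i = i2"
    then show ?thesis using kk a1 a2 sum lt i1n by blast
  qed
qed

definition dd where "dd k = base k - tau k"

lemma dd_nonskip: "k < n * (n - 1) \<Longrightarrow> \<not> sk k \<Longrightarrow> dd (Suc k) \<ge> dd k + 1"
  using tauS[of k] base_Suc[of k] by (simp add: dd_def)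

lemma dd_skip: "k < n * (n - 1) \<Longrightarrow> sk k \<Longrightarrow> dd (Suc k) = base (Suc k) - alp k"
  using tauS[of k] by (simp add: dd_def)

lemma dd0: "dd 0 = 1" using tau0 by (simp add: dd_def base_def)

lemma ddN: "dd (n * (n - 1)) = int n + 1" using tauN base_NN by (simp add: dd_def)

lemma dd_lower: "k \<le> n * (n - 1) \<Longrightarrow> dd k \<ge> 1"
proof (induction k rule: less_induct)
  case (less k)
  show ?case
  proof (cases k)
    case 0
    then show ?thesis using dd0 by simp
  next
    case (Suc k')
    have k': "k' < n * (n - 1)" using less.prems Suc by simp
    show ?thesis
    proof (cases "sk k'")
      case False
      have "dd k' \<ge> 1" using less.IH[of k'] Suc less.prems by simp
      then show ?thesis using dd_nonskip[OF k' False] Suc by simp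
    next
      case True
      have ds: "dd k = base (Suc k') - alp k'" using dd_skip[OF k' True] Suc by simp
      have bs: "base (Suc k') \<ge> base k' + 1" by (rule base_Suc)
      from FS[OF k' True] show ?thesis
      proof
        assume "alp k' = base k' \<and> (\<exists>g. k' < g \<and> g < n * (n - 1) \<and> sk g \<and> alp g = base g - dl k' \<and> dl k' + dl g = int n)"
        then show ?thesis using ds bs by simp
      next
        assume "\<exists>f. f < k' \<and> sk f \<and> alp f = base f \<and> alp k' = base k' - dl f \<and> dl f + dl k' = int n"
        then obtain f where f: "f < k'" "alp f = base f" "alp k' = base k' - dl f" by blast
        have "dd f \<ge> 1" using less.IH[of f] f Suc less.prems by simp
        moreover have "dl f = dd f" using f by (simp add: dl_def dd_def)
        ultimately show ?thesis using ds bs f by simp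
      qed
    qed
  qed
qed

lemma dd_upper: "k \<le> n * (n - 1) \<Longrightarrow> dd k \<le> int n + 1"
proof (induction "n * (n - 1) - k" arbitrary: k rule: less_induct)
  case (less k)
  show ?case
  proof (cases "k = n * (n - 1)")
    case True
    then show ?thesis using ddN by simp
  next
    case False
    then have k: "k < n * (n - 1)" using less.prems by simp
    show ?thesis
    proof (cases "sk k")
      case False
      have "dd (Suc k) \<le> int n + 1" using less.hyps[of "Suc k"] k by simp
      then show ?thesis using dd_nonskip[OF k False] by simp
    next
      case True
      from FS[OF k True] show ?thesis
      proof
        assume "alp k = base k \<and> (\<exists>g. k < g \<and> g < n * (n - 1) \<and> sk g \<and> alp g = base g - dl k \<and> dl k + dl g = int n)"
        then obtain g where a: "alp k = base k" and g: "k < g" "g < n * (n - 1)" "sk g" "alp g = base g - dl k"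
          by blast
        have "dd (Suc g) \<le> int n + 1" using less.hyps[of "Suc g"] g by simp
        moreover have "dd (Suc g) = base (Suc g) - base g + dl k" using dd_skip[OF g(2,3)] g(4) by simp
        moreover have "base (Suc g) \<ge> base g + 1" by (rule base_Suc)
        moreover have "dd k = dl k" using a by (simp add: dl_def dd_def)
        ultimately show ?thesis by simp
      next
        assume "\<exists>f. f < k \<and> sk f \<and> alp f = base f \<and> alp k = base k - dl f \<and> dl f + dl k = int n"
        then obtain f where f: "alp k = base k - dl f" "dl f + dl k = int n" by blast
        then have "dd k = int n" by (simp add: dd_def dl_def)
        then show ?thesis by simp
      qed
    qed
  qed
qed

theorem dl_pos:
  assumes k: "k < n * (n - 1)" and s: "sk k"
  shows "tau k < alp k"
  using FS[OF k s]
proof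
  assume "alp k = base k \<and> (\<exists>g. k < g \<and> g < n * (n - 1) \<and> sk g \<and> alp g = base g - dl k \<and> dl k + dl g = int n)"
  then have "dl k = dd k" by (simp add: dl_def dd_def)
  then show ?thesis using dd_lower[of k] k by (simp add: dl_def)
next
  assume "\<exists>f. f < k \<and> sk f \<and> alp f = base f \<and> alp k = base k - dl f \<and> dl f + dl k = int n"
  then obtain f where f: "f < k" "alp f = base f" "alp k = base k - dl f" "dl f + dl k = int n" by blast
  have "dd (Suc k) \<le> int n + 1" using dd_upper[of "Suc k"] k by simp
  moreover have "dd (Suc k) = base (Suc k) - base k + dl f" using dd_skip[OF k s] f(3) by simp
  moreover have "base (Suc k) \<ge> base k + 1" by (rule base_Suc)
  ultimately have "dl f \<le> int n" by simp
  moreover have "dl f \<noteq> int n" using cls[of f] f(1) k by (simp add: dl_def)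
  ultimately have "dl f < int n" by simp
  then show ?thesis using f(4) by (simp add: dl_def)
qed

end

lemma sigma_arefl: "n \<ge> 2 \<Longrightarrow> sigma n (Suc k) = arefl n (int k) (int k + 1)"
  by (rule ext) (simp add: sigma_Suc arefl_def)

definition FW :: "nat \<Rightarrow> (int \<Rightarrow> int) list" where
  "FW n = map (sigma n) [1..<n * (n - 1) + 1]"

lemma FW_len: "length (FW n) = n * (n - 1)" by (simp add: FW_def del: upt_Suc)
lemma FW_nth: "k < n * (n - 1) \<Longrightarrow> FW n ! k = sigma n (Suc k)" by (simp add: FW_def del: upt_Suc)

lemma subw_FW: "n \<ge> 2 \<Longrightarrow> subw n (FW n)"
  by unfold_locales (auto simp: FW_len FW_nth)

lemma FW_prod:
  assumes n2: "n \<ge> 2"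
  shows "prodw (FW n) = lambda_n n"
proof -
  interpret F: subw n "FW n" by (rule subw_FW[OF n2])
  have nsk: "\<not> F.sk k" if "k < n * (n - 1)" for k
    using that sigma_ne_id[OF n2] by (simp add: F.sk_def FW_nth)
  have tau: "F.tau k = 0" if "k \<le> n * (n - 1)" for k
    using that
  proof (induction k)
    case 0 show ?case by (rule F.tau0)
  next
    case (Suc k) then show ?case using F.tau_Suc[of k] nsk[of k] by simp
  qed
  have alp: "F.alp k = int k + 1 + int (k div (n - 1))" if "k < n * (n - 1)" for k
    using that
  proof (induction k rule: less_induct)
    case (less k)
    show ?case
    proof (cases "k < n - 1")
      case True
      then show ?thesis using F.alp_small[OF True] by simp
    next
      case False
      then have k1: "n - 1 \<le> k" by simp
      have "F.alp k = F.alp (k - (n - 1)) + int n"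
        using F.alp_rec[OF k1 less.prems] nsk[of "k - (n - 1)"] less.prems by (simp add: F.ww_def)
      also have "F.alp (k - (n - 1)) = int (k - (n - 1)) + 1 + int ((k - (n - 1)) div (n - 1))"
        using less.IH[of "k - (n - 1)"] less.prems n2 k1 by simp
      finally have A: "F.alp k = int (k - (n - 1)) + 1 + int ((k - (n - 1)) div (n - 1)) + int n" .
      have "k div (n - 1) = (k - (n - 1) + (n - 1)) div (n - 1)" using k1 by simp
      also have "\<dots> = (k - (n - 1)) div (n - 1) + 1" by (rule div_add_self2) (use n2 in simp)
      finally have B: "k div (n - 1) = (k - (n - 1)) div (n - 1) + 1" .
      show ?thesis unfolding A B using k1 n2 by (simp add: of_nat_diff)
    qed
  qed
  have PN: "F.P (n * (n - 1)) = lambda_n n"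
  proof
    fix x
    obtain m where nm: "n = Suc m" using n2 by (cases n) auto
    have m1: "m \<ge> 1" using n2 nm by simp
    have NN: "n * (n - 1) = m * m + m" using nm by simp
    have affP: "aff n (F.P (n * (n - 1)))" by (rule F.aff_P)
    show "F.P (n * (n - 1)) x = lambda_n n x"
    proof (cases "x mod int n = 0")
      case True
      have "x mod int n = int (n * (n - 1)) mod int n" using True by simp
      then obtain t where t: "x = int (n * (n - 1)) + t * int n" using mod_eq_ex by blast
      have "F.P (n * (n - 1)) x = F.P (n * (n - 1)) (int (n * (n - 1))) + t * int n"
        unfolding t by (rule aff_shift[OF affP])
      also have "F.P (n * (n - 1)) (int (n * (n - 1))) = 0" using tau[of "n * (n - 1)"] by (simp only: F.tau_def order_refl)
      moreover have "int (n - 1) = int n - 1" using n2 by simp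
      ultimately show ?thesis using True t by (simp add: lambda_n_def)
    next
      case False
      define c where "c = nat (x mod int n)"
      have xm: "0 \<le> x mod int n" "x mod int n < int n" using n2 by simp_all
      have c0: "c > 0" "c < n" using False xm unfolding c_def by linarith+
      define k where "k = m * m + (c - 1)"
      have k1: "n * (n - 1) - (n - 1) \<le> k" unfolding k_def using NN nm by simp
      have k2: "k < n * (n - 1)" unfolding k_def using NN nm c0 by simp
      have kdiv: "k div (n - 1) = m" unfolding k_def using nm c0 by (intro div_nat_eqI) auto
      have "int k mod int n = x mod int n"
      proof -
        have "int k = int c + (int m - 1) * int n" unfolding k_def using nm c0 m1
          by (simp add: of_nat_diff algebra_simps)
        then have "int k mod int n = int c mod int n" by simp
        also have "int c = x mod int n" unfolding c_def using n2 by simp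
        finally show ?thesis by simp
      qed
      then obtain t where t: "x = int k + t * int n" using mod_eq_ex by metis
      have "F.P (n * (n - 1)) x = F.P (n * (n - 1)) (int k) + t * int n"
        unfolding t by (rule aff_shift[OF affP])
      also have "F.P (n * (n - 1)) (int k) = F.alp k"
        using F.P_final[OF k1 k2] nsk[OF k2] by (simp add: F.ww_def)
      also have "F.alp k = int k + int n" using alp[OF k2] kdiv nm by simp
      finally show ?thesis using False t by (simp add: lambda_n_def)
    qed
  qed
  have "F.P (n * (n - 1)) = prodw (FW n)" by (simp add: F.P_def upref_def FW_len)
  then show ?thesis using PN by simp
qed

context subw
begin

lemma tinv_eq:
  assumes k: "k < n * (n - 1)"
  shows "tinv n u (Suc k) = arefl n (tau k) (alp k)"
proof -
  have ne: "int k mod int n \<noteq> (int k + 1) mod int n"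
    using mod_neq_small[of "int k + 1" "int k" n] n2 by auto
  have "tinv n u (Suc k) = P k \<circ> arefl n (int k) (int k + 1) \<circ> inv (P k)"
    by (simp add: tinv_def P_def sigma_arefl[OF n2])
  also have "\<dots> = arefl n (P k (int k)) (P k (int k + 1))"
    by (rule conj_arefl[OF aff_P npos ne])
  finally show ?thesis by (simp add: tau_def alp_def)
qed

lemma telescope:
  "k \<le> n * (n - 1) \<Longrightarrow> prodw (take k (FW n)) =
     prodw (map (tinv n u) (filter (\<lambda>j. u ! (j - 1) = id) [1..<k + 1])) \<circ> P k"
proof (induction k)
  case 0
  then show ?case by (simp add: P0)
next
  case (Suc k)
  have k: "k < n * (n - 1)" using Suc.prems by simp
  define Q where "Q = (\<lambda>j::nat. u ! (j - 1) = id)"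
  define R where "R = prodw (map (tinv n u) (filter Q [1..<k + 1]))"
  have IH: "prodw (take k (FW n)) = R \<circ> P k"
    unfolding R_def Q_def by (rule Suc.IH) (use k in simp)
  have tk: "take (Suc k) (FW n) = take k (FW n) @ [sigma n (Suc k)]"
    using k by (simp add: take_Suc_conv_app_nth FW_len FW_nth)
  have L: "prodw (take (Suc k) (FW n)) = R \<circ> P k \<circ> sigma n (Suc k)"
    unfolding tk by (simp add: IH)
  have up: "[1..<Suc k + 1] = [1..<k + 1] @ [Suc k]" by (simp del: upt_Suc add: upt_Suc_append)
  have injP: "inj (P k)" using aff_P[of k] by (simp add: aff_def bij_is_inj)
  show ?case
  proof (cases "sk k")
    case True
    then have ui: "u ! k = id" by (simp add: sk_def)
    have fl: "filter Q [1..<Suc k + 1] = filter Q [1..<k + 1] @ [Suc k]"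
      unfolding up using ui by (simp del: upt_Suc add: Q_def)
    have "prodw (map (tinv n u) (filter Q [1..<Suc k + 1])) \<circ> P (Suc k)
        = R \<circ> tinv n u (Suc k) \<circ> P k"
      unfolding fl R_def using ui P_Suc[OF k] by (simp del: upt_Suc)
    moreover have "tinv n u (Suc k) \<circ> P k = P k \<circ> sigma n (Suc k)"
      using injP by (simp add: tinv_def P_def fun_eq_iff)
    ultimately have M: "prodw (map (tinv n u) (filter Q [1..<Suc k + 1])) \<circ> P (Suc k) = R \<circ> P k \<circ> sigma n (Suc k)"
      by (simp del: upt_Suc add: comp_assoc)
    have "prodw (take (Suc k) (FW n)) = prodw (map (tinv n u) (filter Q [1..<Suc k + 1])) \<circ> P (Suc k)"
      using L M by (simp del: upt_Suc)
    then show ?thesis unfolding Q_def .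
  next
    case False
    then have ui: "u ! k = sigma n (Suc k)" using letters[OF k] by (auto simp: sk_def)
    have fl: "filter Q [1..<Suc k + 1] = filter Q [1..<k + 1]"
      unfolding up using False by (simp del: upt_Suc add: Q_def sk_def)
    have "prodw (map (tinv n u) (filter Q [1..<Suc k + 1])) \<circ> P (Suc k)
        = R \<circ> P k \<circ> sigma n (Suc k)"
      unfolding fl R_def using ui P_Suc[OF k] by (simp del: upt_Suc add: o_assoc)
    then have "prodw (take (Suc k) (FW n)) = prodw (map (tinv n u) (filter Q [1..<Suc k + 1])) \<circ> P (Suc k)"
      using L by (simp del: upt_Suc)
    then show ?thesis unfolding Q_def .
  qed
qed

end

theorem lemma5p14:
  fixes n :: nat and u :: "(int \<Rightarrow> int) list"
  assumes "n \<ge> 2" and "u \<in> Sn n"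
  shows "tree_like n (r_of n u)"
proof -
  have n2: "n \<ge> 2" by fact
  have len: "length u = n * (n - 1)" and lett: "\<forall>j\<in>{1..n*(n-1)}. u ! (j-1) = sigma n j \<or> u ! (j-1) = id"
    and cardS: "card (skips u) = 2 * n - 2" and pid: "prodw u = id"
    using assms(2) by (auto simp: Sn_def)
  interpret S: subw n u
  proof
    show "n \<ge> 2" by fact
    show "length u = n * (n - 1)" by fact
    fix k assume "k < n * (n - 1)"
    then show "u ! k = sigma n (Suc k) \<or> u ! k = id" using lett[rule_format, of "Suc k"] by simp
  qed
  have PN: "S.P (n * (n - 1)) = id" using pid len by (simp add: S.P_def upref_def)
  have skset: "skips u = Suc ` {k. k < n * (n - 1) \<and> S.sk k}"
  proof
    show "skips u \<subseteq> Suc ` {k. k < n * (n - 1) \<and> S.sk k}"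
    proof
      fix j assume "j \<in> skips u"
      then have j: "1 \<le> j" "j \<le> n * (n - 1)" "u ! (j - 1) = id" using len by (auto simp: skips_def)
      then have "j = Suc (j - 1)" by simp
      moreover have "j - 1 \<in> {k. k < n * (n - 1) \<and> S.sk k}" using j by (auto simp: S.sk_def)
      ultimately show "j \<in> Suc ` {k. k < n * (n - 1) \<and> S.sk k}" by blast
    qed
  next
    show "Suc ` {k. k < n * (n - 1) \<and> S.sk k} \<subseteq> skips u"
      using len by (auto simp: skips_def S.sk_def)
  qed
  have cardsk: "card {k. k < n * (n - 1) \<and> S.sk k} = 2 * (n - 1)"
    using cardS skset by (simp add: card_image)
  interpret C: comb n S.sk S.tau S.alp
  proof
    show "n \<ge> 2" by fact
    show "\<And>k. k < n * (n - 1) \<Longrightarrow> S.tau (Suc k) = (if S.sk k then S.alp k else S.tau k)"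
      by (rule S.tau_Suc)
    show "\<And>k. k < n - 1 \<Longrightarrow> S.alp k = int k + 1" by (rule S.alp_small)
    show "\<And>k. n - 1 \<le> k \<Longrightarrow> k < n * (n - 1) \<Longrightarrow>
        S.alp k = (if S.sk (k - (n - 1)) then S.tau (k - (n - 1)) else S.alp (k - (n - 1))) + int n"
      using S.alp_rec by (simp add: S.ww_def)
    show "\<And>k. n * (n - 1) - (n - 1) \<le> k \<Longrightarrow> k < n * (n - 1) \<Longrightarrow>
        (if S.sk k then S.tau k else S.alp k) = int k"
      using S.P_final PN by (simp add: S.ww_def)
    show "S.tau 0 = 0" by (rule S.tau0)
    show "S.tau (n * (n - 1)) = int (n * (n - 1))" using PN by (simp add: S.tau_def)
    show "\<And>k. k < n * (n - 1) \<Longrightarrow> S.alp k \<noteq> S.tau k + int n"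
    proof
      fix k assume "S.alp k = S.tau k + int n"
      then have "S.alp k mod int n = S.tau k mod int n" by simp
      then show False using S.cls by simp
    qed
    show "card {k. k < n * (n - 1) \<and> S.sk k} = 2 * (n - 1)" by (rule cardsk)
  qed
  define J where "J = filter (\<lambda>j. u ! (j - 1) = id) [1..<length u + 1]"
  have rs: "r_of n u = map (tinv n u) J" by (simp add: r_of_def J_def)
  have setJ: "set J = skips u" unfolding J_def skips_def by auto
  have distJ: "distinct J" unfolding J_def by simp
  have lenJ: "length J = 2 * n - 2" using distinct_card[OF distJ] setJ cardS by simp
  have sortJ: "sorted_wrt (<) J" unfolding J_def by (rule sorted_wrt_filter) (simp del: upt_Suc)
  have memJ: "1 \<le> j \<and> j \<le> n * (n - 1) \<and> S.sk (j - 1)" if "j \<in> set J" for j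
    using that setJ len by (auto simp: skips_def S.sk_def)
  have tinvJ: "tinv n u j = arefl n (S.tau (j - 1)) (S.alp (j - 1))" if "j \<in> set J" for j
  proof -
    have "j = Suc (j - 1)" "j - 1 < n * (n - 1)" using memJ[OF that] by auto
    then show ?thesis using S.tinv_eq[of "j - 1"] by metis
  qed
  have posJ: "S.tau (j - 1) < S.alp (j - 1)" if "j \<in> set J" for j
    using C.dl_pos memJ[OF that] by auto
  have clsJ: "S.tau (j - 1) mod int n \<noteq> S.alp (j - 1) mod int n" if "j \<in> set J" for j
    using S.cls[of "j - 1"] by simp
  have prod: "prodw (r_of n u) = lambda_n n"
  proof -
    have "prodw (take (n * (n - 1)) (FW n)) =
        prodw (map (tinv n u) (filter (\<lambda>j. u ! (j - 1) = id) [1..<n * (n - 1) + 1])) \<circ> S.P (n * (n - 1))"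
      by (rule S.telescope) simp
    then have "prodw (FW n) = prodw (r_of n u)" using PN len by (simp add: FW_len rs J_def del: upt_Suc)
    then show ?thesis using FW_prod[OF n2] by simp
  qed
  have refl: "\<forall>r\<in>set (r_of n u). is_reflection n r"
  proof
    fix r assume "r \<in> set (r_of n u)"
    then obtain j where j: "j \<in> set J" "r = tinv n u j" using rs by auto
    then show "is_reflection n r" unfolding is_reflection_def using tinvJ[OF j(1)] clsJ[OF j(1)] by blast
  qed
  have fact: "r_of n u \<in> factset n (lambda_n n)"
    unfolding factset_def using lenJ rs refl prod by simp
  have between: "S.tau (J ! k - 1) = S.alp (J ! (k - 1) - 1)" if k: "1 \<le> k" "k < length J" for k
  proof -
    define j0 where "j0 = J ! (k - 1)"
    define j1 where "j1 = J ! k"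
    have j0J: "j0 \<in> set J" unfolding j0_def using k by simp
    have j1J: "j1 \<in> set J" unfolding j1_def using k by simp
    have lt: "j0 < j1" unfolding j0_def j1_def using sorted_wrt_nth_less[OF sortJ, of "k - 1" k] k by simp
    have t0: "S.tau j0 = S.alp (j0 - 1)"
    proof -
      have "j0 = Suc (j0 - 1)" "j0 - 1 < n * (n - 1)" "S.sk (j0 - 1)" using memJ[OF j0J] by auto
      then show ?thesis using S.tau_Suc[of "j0 - 1"] by metis
    qed
    have nosk: "\<not> S.sk i" if i: "j0 \<le> i" "Suc i < j1" for i
    proof
      assume si: "S.sk i"
      have "i < n * (n - 1)" using i memJ[OF j1J] by simp
      then have "Suc i \<in> skips u" using si by (auto simp: skips_def S.sk_def len)
      then have "Suc i \<in> set J" using setJ by simp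
      then obtain p where p: "p < length J" "J ! p = Suc i" by (metis in_set_conv_nth)
      show False
      proof (cases "p \<le> k - 1")
        case True
        have km: "k - 1 < length J" using k by simp
        have "J ! p \<le> J ! (k - 1)"
        proof (cases "p = k - 1")
          case False
          then have "p < k - 1" using True by simp
          then show ?thesis using sorted_wrt_nth_less[OF sortJ _ km, of p] by simp
        qed simp
        then show False using p i unfolding j0_def by simp
      next
        case False
        then have "k \<le> p" by simp
        have "J ! k \<le> J ! p"
        proof (cases "p = k")
          case False
          then have "k < p" using \<open>k \<le> p\<close> by simp
          then show ?thesis using sorted_wrt_nth_less[OF sortJ _ p(1), of k] by simp
        qed simp
        then show False using p i unfolding j1_def by simp
      qed
    qed
    have const: "S.tau i = S.tau j0" if "j0 \<le> i" "i \<le> j1 - 1" for i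
      using that
    proof (induction i rule: dec_induct)
      case base then show ?case by simp
    next
      case (step i)
      have j1b: "j1 \<le> n * (n - 1)" "1 \<le> j1" using memJ[OF j1J] by auto
      have si: "Suc i \<le> j1 - 1" using step by simp
      have "i < n * (n - 1)" using si j1b by linarith
      moreover have "\<not> S.sk i" using nosk[of i] step(1) si j1b by linarith
      ultimately have "S.tau (Suc i) = S.tau i" using S.tau_Suc[of i] by simp
      then show ?case using step by simp
    qed
    have "S.tau (j1 - 1) = S.tau j0" using const[of "j1 - 1"] lt by simp
    then show ?thesis using t0 unfolding j0_def j1_def by simp
  qed
  show ?thesis
    unfolding tree_like_def
  proof (intro conjI exI)
    show "r_of n u \<in> factset n (lambda_n n)" by (rule fact)
    define a where "a = (\<lambda>k. S.tau (J ! k - 1))"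
    define b where "b = (\<lambda>k. S.alp (J ! (k - 1) - 1))"
    show "\<forall>k\<in>{1..2 * n - 2}. a (k - 1) < b k \<and> a (k - 1) mod int n \<noteq> b k mod int n \<and>
        r_of n u ! (k - 1) = arefl n (a (k - 1)) (b k)"
    proof
      fix k assume k: "k \<in> {1..2 * n - 2}"
      then have kl: "k - 1 < length J" using lenJ by auto
      then have kJ: "J ! (k - 1) \<in> set J" by (rule nth_mem)
      have rk: "r_of n u ! (k - 1) = tinv n u (J ! (k - 1))" using rs kl by simp
      show "a (k - 1) < b k \<and> a (k - 1) mod int n \<noteq> b k mod int n \<and>
        r_of n u ! (k - 1) = arefl n (a (k - 1)) (b k)"
        unfolding a_def b_def rk using posJ[OF kJ] clsJ[OF kJ] tinvJ[OF kJ] by simp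
    qed
    show "\<forall>k\<in>{1..2 * n - 3}. a k mod int n = b k mod int n"
    proof
      fix k assume k: "k \<in> {1..2 * n - 3}"
      then have "1 \<le> k" "k < length J" using lenJ by auto
      then show "a k mod int n = b k mod int n" unfolding a_def b_def using between by simp
    qed
  qed
qed


end
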